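(* Let $F$ be an ordered field, let $\mathcal{U}$ be a free ultrafilter on $\mathbb{N}$, and let ${}^\ast F=F^{\mathbb{N}}/\mathcal{U}$ be the ultrapower. Let $\langle u_n\rangle_{n\in\mathbb{N}}$ be a sequence in $F$ and let $u\in{}^\ast F$ be its equivalence class. Consider the partition $\mathbb{N}=A\sqcup B\sqcup C$ where $A=\{n\in\mathbb{N}: u_n<u\}$, $B=\{n\in\mathbb{N}: u_n=u\}$, $C=\{n\in\mathbb{N}: u_n>u\}$ (here $u_n\in F$ is regarded as an element of ${}^\ast F$). Then exactly one of the following three possibilities occurs: (1) $B\in\mathcal{U}$, and then $\langle u_n\rangle$ contains an infinite constant subsequence; (2) $A\in\mathcal{U}$, and then $\langle u_n\rangle$ contains an infinite strictly increasing subsequence; (3) $C\in\mathcal{U}$, and then $\langle u_n\rangle$ contains an infinite strictly decreasing subsequence.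
   Context: A free ultrafilter $\mathcal{U}$ on $\mathbb{N}$ is an ultrafilter on $\mathbb{N}$ containing every cofinite subset of $\mathbb{N}$. The ultrapower ${}^\ast F=F^{\mathbb{N}}/\mathcal{U}$ is the set of equivalence classes $[\langle v_n\rangle]$ of sequences in $F$, where two sequences are equivalent iff $\{n: v_n=w_n\}\in\mathcal{U}$. It is ordered by $[\langle v_n\rangle]<[\langle w_n\rangle]$ iff $\{n\in\mathbb{N}: v_n<w_n\}\in\mathcal{U}$. Each $x\in F$ is identified with the class $[\langle x\rangle]$ of the constant sequence with value $x$; thus for $x\in F$, $x<[\langle w_n\rangle]$ iff $\{n: x<w_n\}\in\mathcal{U}$, and similarly for $=$ and $>$. *)

theory Defs
  imports Main
begin

definition free_ultrafilter :: "nat set set \<Rightarrow> bool" where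
  "free_ultrafilter U \<longleftrightarrow>
     UNIV \<in> U \<and> {} \<notin> U \<and>
     (\<forall>X Y. X \<in> U \<and> X \<subseteq> Y \<longrightarrow> Y \<in> U) \<and>
     (\<forall>X Y. X \<in> U \<and> Y \<in> U \<longrightarrow> X \<inter> Y \<in> U) \<and>
     (\<forall>X. X \<in> U \<or> - X \<in> U) \<and>
     (\<forall>X. finite (- X) \<longrightarrow> X \<in> U)"

text \<open>Order and equality in the ultrapower F^N/U, on representative sequences.
  An element x of F is identified with the class of the constant sequence (\<lambda>_. x).\<close>
definition ustar_less :: "nat set set \<Rightarrow> (nat \<Rightarrow> 'a::linorder) \<Rightarrow> (nat \<Rightarrow> 'a) \<Rightarrow> bool" where
  "ustar_less U v w \<longleftrightarrow> {n. v n < w n} \<in> U"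

definition ustar_eq :: "nat set set \<Rightarrow> (nat \<Rightarrow> 'a) \<Rightarrow> (nat \<Rightarrow> 'a) \<Rightarrow> bool" where
  "ustar_eq U v w \<longleftrightarrow> {n. v n = w n} \<in> U"

end

theory Submission
  imports Defs "HOL-Library.Infinite_Set"
begin

lemma chain_exists:
  assumes "s0 \<in> S" and step: "\<And>n. n \<in> S \<Longrightarrow> \<exists>m. m \<in> S \<and> n < m \<and> P n m"
  shows "\<exists>r::nat\<Rightarrow>nat. strict_mono r \<and> (\<forall>i. P (r i) (r (Suc i)))"
proof -
  define f where "f n = (SOME m. m \<in> S \<and> n < m \<and> P n m)" for n
  have f: "n \<in> S \<Longrightarrow> f n \<in> S \<and> n < f n \<and> P n (f n)" for n
    unfolding f_def using someI_ex[OF step] by blast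
  define r where "r i = (f ^^ i) s0" for i
  have rS: "r i \<in> S" for i
    by (induction i) (auto simp: r_def assms f)
  have rs: "r (Suc i) = f (r i)" for i by (simp add: r_def)
  show ?thesis
    by (rule exI[of _ r]) (auto simp: strict_mono_Suc_iff rs f rS)
qed

lemma fu_facts:
  assumes "free_ultrafilter U"
  shows "X \<in> U \<Longrightarrow> Y \<in> U \<Longrightarrow> X \<inter> Y \<in> U"
    and "X \<in> U \<Longrightarrow> X \<subseteq> Y \<Longrightarrow> Y \<in> U"
    and "X \<in> U \<or> - X \<in> U"
    and "{} \<notin> U"
    and "finite (- X) \<Longrightarrow> X \<in> U"
  using assms unfolding free_ultrafilter_def by blast+

lemma fu_infinite:
  assumes "free_ultrafilter U" "X \<in> U" shows "infinite X"
proof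
  assume "finite X"
  then have "- X \<in> U" using fu_facts(5)[OF assms(1), of "- X"] by simp
  then have "X \<inter> - X \<in> U" using fu_facts(1)[OF assms(1)] assms(2) by blast
  then show False using fu_facts(4)[OF assms(1)] by simp
qed

lemma fu_step:
  assumes "free_ultrafilter U" "S \<in> U" "{m. Q m} \<in> U"
  shows "\<exists>m. m \<in> S \<and> n < m \<and> Q m"
proof -
  have "{n<..} \<in> U" using fu_facts(5)[OF assms(1)] by (simp add: Compl_greaterThan)
  then have "S \<inter> {m. Q m} \<inter> {n<..} \<in> U" using fu_facts(1)[OF assms(1)] assms by blast
  then have "S \<inter> {m. Q m} \<inter> {n<..} \<noteq> {}" using fu_facts(4)[OF assms(1)] by metis
  then show ?thesis by auto
qed

theorem theorem3p2:
  fixes U :: "nat set set" and u :: "nat \<Rightarrow> 'a::linordered_field"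
  assumes "free_ultrafilter U"
  defines "A \<equiv> {n. ustar_less U (\<lambda>_. u n) u}"
      and "B \<equiv> {n. ustar_eq U (\<lambda>_. u n) u}"
      and "C \<equiv> {n. ustar_less U u (\<lambda>_. u n)}"
  shows "A \<inter> B = {} \<and> A \<inter> C = {} \<and> B \<inter> C = {} \<and> A \<union> B \<union> C = UNIV
    \<and> ((B \<in> U \<and> A \<notin> U \<and> C \<notin> U) \<or> (A \<in> U \<and> B \<notin> U \<and> C \<notin> U)
        \<or> (C \<in> U \<and> A \<notin> U \<and> B \<notin> U))
    \<and> (B \<in> U \<longrightarrow> (\<exists>r::nat \<Rightarrow> nat. strict_mono r \<and> (\<forall>i j. u (r i) = u (r j))))
    \<and> (A \<in> U \<longrightarrow> (\<exists>r::nat \<Rightarrow> nat. strict_mono r \<and> strict_mono (u \<circ> r)))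
    \<and> (C \<in> U \<longrightarrow> (\<exists>r::nat \<Rightarrow> nat. strict_mono r \<and> (\<forall>i j. i < j \<longrightarrow> u (r j) < u (r i))))"
proof -
  note F = fu_facts[OF assms(1)]
  have Ad: "A = {n. {m. u n < u m} \<in> U}" unfolding A_def ustar_less_def by simp
  have Bd: "B = {n. {m. u n = u m} \<in> U}" unfolding B_def ustar_eq_def by simp
  have Cd: "C = {n. {m. u m < u n} \<in> U}" unfolding C_def ustar_less_def by simp
  have dis: "X \<in> U \<Longrightarrow> Y \<in> U \<Longrightarrow> X \<inter> Y = {} \<Longrightarrow> False" for X Y
    using F(1,4) by metis
  have three: "X \<in> U \<or> Y \<in> U \<or> Z \<in> U" if "X \<union> Y \<union> Z = UNIV" for X Y Z
  proof (rule ccontr)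
    assume "\<not> ?thesis"
    then have "- X \<inter> - Y \<inter> - Z \<in> U" using F(1,3) by meson
    moreover have "- X \<inter> - Y \<inter> - Z = {}" using that by auto
    ultimately show False using F(4) by simp
  qed
  have d1: "A \<inter> B = {}" unfolding Ad Bd
  proof (safe)
    fix x assume "{m. u x < u m} \<in> U" "{m. u x = u m} \<in> U"
    then show "x \<in> {}" using dis[of "{m. u x < u m}" "{m. u x = u m}"] by (auto simp: set_eq_iff)
  qed
  have d2: "A \<inter> C = {}" unfolding Ad Cd
  proof (safe)
    fix x assume "{m. u x < u m} \<in> U" "{m. u m < u x} \<in> U"
    then show "x \<in> {}" using dis[of "{m. u x < u m}" "{m. u m < u x}"] by (auto simp: set_eq_iff)
  qed
  have d3: "B \<inter> C = {}" unfolding Bd Cd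
  proof (safe)
    fix x assume "{m. u x = u m} \<in> U" "{m. u m < u x} \<in> U"
    then show "x \<in> {}" using dis[of "{m. u x = u m}" "{m. u m < u x}"] by (auto simp: set_eq_iff)
  qed
  have cov: "A \<union> B \<union> C = UNIV"
  proof
    show "UNIV \<subseteq> A \<union> B \<union> C"
    proof
      fix n
      have "{m. u n < u m} \<union> {m. u n = u m} \<union> {m. u m < u n} = UNIV" by auto
      from three[OF this] show "n \<in> A \<union> B \<union> C" unfolding Ad Bd Cd by auto
    qed
  qed simp
  have ex1: "(B \<in> U \<and> A \<notin> U \<and> C \<notin> U) \<or> (A \<in> U \<and> B \<notin> U \<and> C \<notin> U)
        \<or> (C \<in> U \<and> A \<notin> U \<and> B \<notin> U)"
    using three[OF cov] dis d1 d2 d3 by (metis inf_commute)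
  have pB: "\<exists>r::nat \<Rightarrow> nat. strict_mono r \<and> (\<forall>i j. u (r i) = u (r j))" if "B \<in> U"
  proof -
    have "B \<noteq> {}" using that F(4) by auto
    then obtain n where "n \<in> B" by auto
    then have S: "{m. u n = u m} \<in> U" unfolding Bd by simp
    let ?S = "{m. u n = u m}"
    have inf: "infinite ?S" using fu_infinite[OF assms(1) S] .
    have "strict_mono (Infinite_Set.enumerate ?S)" using strict_mono_enumerate[OF inf] .
    moreover have "\<forall>i. Infinite_Set.enumerate ?S i \<in> ?S" using enumerate_in_set[OF inf] by blast
    ultimately show ?thesis by (intro exI[of _ "Infinite_Set.enumerate ?S"]) auto
  qed
  have pA: "\<exists>r::nat \<Rightarrow> nat. strict_mono r \<and> strict_mono (u \<circ> r)" if "A \<in> U"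
  proof -
    have "A \<noteq> {}" using that F(4) by auto
    then obtain s where s: "s \<in> A" by auto
    have "\<exists>m. m \<in> A \<and> n < m \<and> u n < u m" if "n \<in> A" for n
      using fu_step[OF assms(1) \<open>A \<in> U\<close>, of "\<lambda>m. u n < u m"] that unfolding Ad by auto
    from chain_exists[of s A "\<lambda>n m. u n < u m", OF s this] obtain r where
      "strict_mono r" "\<forall>i. u (r i) < u (r (Suc i))" by blast
    then show ?thesis by (intro exI[of _ r]) (simp add: strict_mono_Suc_iff)
  qed
  have pC: "\<exists>r::nat \<Rightarrow> nat. strict_mono r \<and> (\<forall>i j. i < j \<longrightarrow> u (r j) < u (r i))" if "C \<in> U"
  proof -
    have "C \<noteq> {}" using that F(4) by auto
    then obtain s where s: "s \<in> C" by auto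
    have "\<exists>m. m \<in> C \<and> n < m \<and> u m < u n" if "n \<in> C" for n
      using fu_step[OF assms(1) \<open>C \<in> U\<close>, of "\<lambda>m. u m < u n"] that unfolding Cd by auto
    from chain_exists[of s C "\<lambda>n m. u m < u n", OF s this] obtain r where
      r: "strict_mono r" "\<forall>i. u (r (Suc i)) < u (r i)" by blast
    have "strict_mono (\<lambda>i. - u (r i))" using r(2) by (simp add: strict_mono_Suc_iff)
    then have "i < j \<Longrightarrow> u (r j) < u (r i)" for i j
      by (metis neg_less_iff_less strict_mono_less)
    then show ?thesis using r(1) by blast
  qed
  show ?thesis using d1 d2 d3 cov ex1 pA pB pC by blast
qed

end
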